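(* Let $\mathbb{C}^*$ act on $\mathrm{Sp}(i_1,\dots,i_m)$ via its action on $V$ given by $t\cdot e_i=t^{-1}e_i$, $t\cdot f_i=tf_i$. Then $w\mapsto\mathcal F(w)$ is a bijection from the set of row strict tableaux of type $(i_1,\dots,i_m)$ onto the set of fixed points of this action on $\mathrm{Sp}(i_1,\dots,i_m)$.
   Context: Fix integers $n\ge 2k\ge 0$; $V$ is an $n$-dimensional complex vector space with basis $e_1,\dots,e_{n-k},f_1,\dots,f_k$ and $N$ is the nilpotent endomorphism $Ne_i=e_{i-1}$, $Nf_i=f_{i-1}$, $e_0=f_0=0$. For $0<i_1<\dots<i_m=n$, $\mathrm{Sp}(i_1,\dots,i_m)$ is the variety of partial flags $F_{i_1}\subset\dots\subset F_{i_m}$ ($\dim F_{i_l}=i_l$) with $NF_{i_l}\subset F_{i_{l-1}}$ for all $l$ ($F_{i_0}=\{0\}$). A row strict tableau of type $(i_1,\dots,i_m)$ is a two-row Young diagram, top row $n-k$ boxes, bottom row $k$ boxes, filled so that $i_l$ occurs exactly $i_l-i_{l-1}$ times ($i_0=0$) and entries strictly decrease along each row. For such $w$, $\mathcal F(w)$ is the partial flag with $\mathcal F_{i_l}(w)=\langle e_j,f_r: j\le t_{i_l},\ r\le b_{i_l}\rangle$, where $t_s$ (resp. $b_s$) is the number of entries $\le s$ in the top (resp. bottom) row of $w$. *)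

theory Defs
  imports Complex_Main "HOL-Library.Function_Algebras"
begin

text \<open>The vector space V = C^n. A vector is a function on indices (True, j) (standing for e_j)
  and (False, r) (standing for f_r), supported on the index set below.\<close>

type_synonym vect = "bool \<times> nat \<Rightarrow> complex"

definition cscale :: "complex \<Rightarrow> vect \<Rightarrow> vect" where
  "cscale c v = (\<lambda>x. c * v x)"

definition csubspace :: "vect set \<Rightarrow> bool" where
  "csubspace = module.subspace cscale"

definition cspan :: "vect set \<Rightarrow> vect set" where
  "cspan = module.span cscale"

definition cdim :: "vect set \<Rightarrow> nat" where
  "cdim = vector_space.dim cscale"

definition bv :: "bool \<Rightarrow> nat \<Rightarrow> vect" where
  "bv b j = (\<lambda>x. if x = (b, j) then 1 else 0)"

definition Vsp :: "nat \<Rightarrow> nat \<Rightarrow> vect set" where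
  "Vsp n k = cspan ({bv True j | j. 1 \<le> j \<and> j \<le> n - k} \<union> {bv False r | r. 1 \<le> r \<and> r \<le> k})"

text \<open>The nilpotent N: N e_j = e_{j-1}, N f_r = f_{r-1}, e_0 = f_0 = 0 (linear extension).\<close>
definition Nop :: "vect \<Rightarrow> vect" where
  "Nop v = (\<lambda>(b, j). if j = 0 then 0 else v (b, Suc j))"

text \<open>A type (i_1,...,i_m) is given as the list [i_1,...,i_m]; i_0 = 0.\<close>
definition valid_type :: "nat \<Rightarrow> nat list \<Rightarrow> bool" where
  "valid_type n ty \<longleftrightarrow> ty \<noteq> [] \<and> 0 < hd ty \<and> sorted_wrt (<) ty \<and> last ty = n"

definition prevd :: "nat list \<Rightarrow> nat \<Rightarrow> nat" where
  "prevd ty l = (if l = 0 then 0 else ty ! (l - 1))"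

text \<open>Spaltenstein variety Sp(i_1,...,i_m): a flag is the list [F_{i_1},...,F_{i_m}], F_{i_0} = {0}.\<close>
definition Sp :: "nat \<Rightarrow> nat \<Rightarrow> nat list \<Rightarrow> vect set list set" where
  "Sp n k ty = {Fs. length Fs = length ty \<and>
     (\<forall>l < length ty. csubspace (Fs ! l) \<and> Fs ! l \<subseteq> Vsp n k \<and> cdim (Fs ! l) = ty ! l) \<and>
     (\<forall>l. Suc l < length ty \<longrightarrow> Fs ! l \<subseteq> Fs ! Suc l) \<and>
     (\<forall>l < length ty. Nop ` (Fs ! l) \<subseteq> (if l = 0 then {0} else Fs ! (l - 1)))}"

text \<open>Row strict tableaux: pair (top row, bottom row), rows read left to right.\<close>
definition row_strict_tableaux :: "nat \<Rightarrow> nat \<Rightarrow> nat list \<Rightarrow> (nat list \<times> nat list) set" where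
  "row_strict_tableaux n k ty = {(top, bot). length top = n - k \<and> length bot = k \<and>
     set (top @ bot) \<subseteq> set ty \<and>
     (\<forall>l < length ty. count_list (top @ bot) (ty ! l) = ty ! l - prevd ty l) \<and>
     sorted_wrt (>) top \<and> sorted_wrt (>) bot}"

definition tflag :: "nat list \<Rightarrow> nat list \<times> nat list \<Rightarrow> vect set list" where
  "tflag ty w = map (\<lambda>s. cspan ({bv True j | j. 1 \<le> j \<and> j \<le> length (filter (\<lambda>x. x \<le> s) (fst w))}
        \<union> {bv False r | r. 1 \<le> r \<and> r \<le> length (filter (\<lambda>x. x \<le> s) (snd w))})) ty"

definition cact :: "complex \<Rightarrow> vect \<Rightarrow> vect" where
  "cact t v = (\<lambda>(b, j). (if b then inverse t else t) * v (b, j))"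

definition flag_act :: "complex \<Rightarrow> vect set list \<Rightarrow> vect set list" where
  "flag_act t Fs = map (\<lambda>F. cact t ` F) Fs"

end

theory Submission imports Defs begin

interpretation cv: vector_space cscale
  by unfold_locales (auto simp: cscale_def algebra_simps fun_eq_iff)

lemma cspan_eq: "cspan = cv.span" by (simp add: cspan_def)
lemma csubspace_eq: "csubspace = cv.subspace" by (simp add: csubspace_def)
lemma cdim_eq: "cdim = cv.dim" by (simp add: cdim_def)

definition J :: "nat \<Rightarrow> nat \<Rightarrow> (bool \<times> nat) set" where
  "J a b = {x. 1 \<le> snd x \<and> snd x \<le> (if fst x then a else b)}"

definition S :: "nat \<Rightarrow> nat \<Rightarrow> vect set" where
  "S a b = cspan ({bv True j | j. 1 \<le> j \<and> j \<le> a} \<union> {bv False r | r. 1 \<le> r \<and> r \<le> b})"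

lemma gens_eq: "{bv True j | j. 1 \<le> j \<and> j \<le> a} \<union> {bv False r | r. 1 \<le> r \<and> r \<le> b}
   = (\<lambda>x. bv (fst x) (snd x)) ` J a b"
  unfolding J_def by (auto simp: image_def)

lemma finite_J: "finite (J a b)"
proof -
  have "J a b \<subseteq> UNIV \<times> {..max a b}" by (auto simp: J_def)
  then show ?thesis by (rule finite_subset) auto
qed

lemma sum_apply_vect: "(\<Sum>y\<in>A. (f y :: vect)) x = (\<Sum>y\<in>A. f y x)"
  by (induction A rule: infinite_finite_induct) auto

lemma bv_apply: "bv b j x = (if x = (b,j) then 1 else 0)" by (simp add: bv_def)

lemma S_char: "S a b = {v. \<forall>x. v x \<noteq> 0 \<longrightarrow> x \<in> J a b}"
proof
  show "S a b \<subseteq> {v. \<forall>x. v x \<noteq> 0 \<longrightarrow> x \<in> J a b}"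
    unfolding S_def cspan_eq gens_eq
  proof (rule cv.span_minimal)
    show "(\<lambda>x. bv (fst x) (snd x)) ` J a b \<subseteq> {v. \<forall>x. v x \<noteq> 0 \<longrightarrow> x \<in> J a b}"
      by (auto simp: bv_def split: if_splits)
    show "cv.subspace {v. \<forall>x. v x \<noteq> 0 \<longrightarrow> x \<in> J a b}"
      unfolding cv.subspace_def by (auto simp: cscale_def) (metis add.right_neutral)
  qed
  show "{v. \<forall>x. v x \<noteq> 0 \<longrightarrow> x \<in> J a b} \<subseteq> S a b"
  proof
    fix v :: vect assume v: "v \<in> {v. \<forall>x. v x \<noteq> 0 \<longrightarrow> x \<in> J a b}"
    have "v = (\<Sum>y\<in>J a b. cscale (v y) (bv (fst y) (snd y)))"
    proof
      fix x
      have "(\<Sum>y\<in>J a b. cscale (v y) (bv (fst y) (snd y))) x = (\<Sum>y\<in>J a b. if y = x then v x else 0)"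
        unfolding sum_apply_vect by (rule sum.cong) (auto simp: cscale_def bv_def)
      also have "\<dots> = v x" using v finite_J[of a b] by (auto simp: sum.delta') (metis prod.collapse)
      finally show "v x = (\<Sum>y\<in>J a b. cscale (v y) (bv (fst y) (snd y))) x" by simp
    qed
    also have "\<dots> \<in> S a b" unfolding S_def cspan_eq gens_eq
      by (intro cv.span_sum cv.span_scale cv.span_base) auto
    finally show "v \<in> S a b" .
  qed
qed

lemma S_subspace: "csubspace (S a b)"
  unfolding S_def cspan_eq csubspace_eq by simp

lemma indep_bv: "cv.independent ((\<lambda>x. bv (fst x) (snd x)) ` A)"
  unfolding cv.independent_explicit_module
proof (intro allI impI)
  fix t u v assume t: "finite t" "t \<subseteq> (\<lambda>x. bv (fst x) (snd x)) ` A"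
    and s: "(\<Sum>v\<in>t. cscale (u v) v) = 0" and vt: "v \<in> t"
  from vt t obtain y where y: "v = bv (fst y) (snd y)" by auto
  have "0 = (\<Sum>v\<in>t. cscale (u v) v) y" using s by simp
  also have "\<dots> = (\<Sum>w\<in>t. if w = v then u v else 0)"
    unfolding sum_apply_vect
  proof (rule sum.cong)
    fix w assume "w \<in> t"
    then obtain z where z: "w = bv (fst z) (snd z)" using t by auto
    have "(w = v) = (z = y)" unfolding z y bv_def by (auto simp: fun_eq_iff) (metis prod.collapse)+
    then show "cscale (u w) w y = (if w = v then u v else 0)"
      by (auto simp: cscale_def z bv_def)
  qed simp
  also have "\<dots> = u v" using t vt by (simp add: sum.delta')
  finally show "u v = 0" by simp
qed

lemma bv_inj: "bv b j = bv c i \<longleftrightarrow> b = c \<and> j = i"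
  by (auto simp: bv_def fun_eq_iff)

lemma inj_bv: "inj (\<lambda>x. bv (fst x) (snd x))"
  by (rule injI) (simp add: bv_inj prod_eq_iff)

lemma card_J: "card (J a b) = a + b"
proof -
  have "J a b = (Pair True) ` {1..a} \<union> (Pair False) ` {1..b}"
    by (auto simp: J_def image_def split: if_splits)
  moreover have "card ((Pair True) ` {1..a} \<union> (Pair False) ` {1..b}) = a + b"
    by (subst card_Un_disjoint) (auto simp: card_image inj_on_def)
  ultimately show ?thesis by simp
qed

lemma S_dim: "cdim (S a b) = a + b"
  unfolding S_def cspan_eq cdim_eq gens_eq
  by (simp add: cv.dim_span_eq_card_independent[OF indep_bv] cv.dim_eq_card_independent[OF indep_bv] card_image[OF inj_on_subset[OF inj_bv]] card_J)

lemma J_mono: "a \<le> a' \<Longrightarrow> b \<le> b' \<Longrightarrow> J a b \<subseteq> J a' b'"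
  unfolding J_def by (auto split: if_splits)

lemma S_mono: "a \<le> a' \<Longrightarrow> b \<le> b' \<Longrightarrow> S a b \<subseteq> S a' b'"
  unfolding S_char using J_mono by blast

lemma bv_in_S: "1 \<le> j \<Longrightarrow> j \<le> (if c then a else b) \<Longrightarrow> bv c j \<in> S a b"
  unfolding S_char J_def by (auto simp: bv_def split: if_splits)

lemma bv_in_S_iff: "1 \<le> j \<Longrightarrow> bv c j \<in> S a b \<longleftrightarrow> j \<le> (if c then a else b)"
  unfolding S_char J_def by (auto simp: bv_def split: if_splits)

lemma S_sub_iff: "S a b \<subseteq> S a' b' \<Longrightarrow> a \<le> a' \<and> b \<le> b'"
proof -
  assume h: "S a b \<subseteq> S a' b'"
  have "a \<le> a'"
  proof (cases "a = 0")
    case False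
    then have "bv True a \<in> S a b" by (intro bv_in_S) auto
    then show ?thesis using h False bv_in_S_iff[of a True a' b'] by auto
  qed simp
  moreover have "b \<le> b'"
  proof (cases "b = 0")
    case False
    then have "bv False b \<in> S a b" by (intro bv_in_S) auto
    then show ?thesis using h False bv_in_S_iff[of b False a' b'] by auto
  qed simp
  ultimately show ?thesis by simp
qed

lemma S_eq_iff: "S a b = S a' b' \<Longrightarrow> a = a' \<and> b = b'"
  using S_sub_iff[of a b a' b'] S_sub_iff[of a' b' a b] by auto

lemma S00: "S 0 0 = {0}"
  unfolding S_char J_def by (auto simp: fun_eq_iff) (metis Suc_n_not_le_n)

lemma Nop_apply: "Nop v (c, j) = (if j = 0 then 0 else v (c, Suc j))"
  by (simp add: Nop_def)

lemma Nop_S: "Nop ` S a b \<subseteq> S (a - 1) (b - 1)"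
proof
  fix w assume "w \<in> Nop ` S a b"
  then obtain v where v: "v \<in> S a b" and w: "w = Nop v" by blast
  show "w \<in> S (a - 1) (b - 1)" unfolding S_char mem_Collect_eq
  proof (intro allI impI)
    fix x assume "w x \<noteq> 0"
    then obtain c j where x: "x = (c, j)" "j \<noteq> 0" "v (c, Suc j) \<noteq> 0"
      using w by (cases x) (auto simp: Nop_apply split: if_splits)
    then have "(c, Suc j) \<in> J a b" using v unfolding S_char by blast
    then show "x \<in> J (a - 1) (b - 1)" using x unfolding J_def by (auto split: if_splits)
  qed
qed

lemma Nop_bv: "2 \<le> j \<Longrightarrow> Nop (bv c j) = bv c (j - 1)"
  by (auto simp: fun_eq_iff Nop_apply bv_def)

lemma Nop_S_rev: "Nop ` S a b \<subseteq> S a' b' \<Longrightarrow> a \<le> a' + 1 \<and> b \<le> b' + 1"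
proof -
  assume h: "Nop ` S a b \<subseteq> S a' b'"
  have "a \<le> a' + 1"
  proof (cases "a \<le> 1")
    case False
    then have "bv True a \<in> S a b" by (intro bv_in_S) auto
    then have "bv True (a - 1) \<in> S a' b'" using h False Nop_bv[of a True] by force
    then have "a - 1 \<le> a'" using False bv_in_S_iff[of "a - 1" True a' b'] by auto
    then show ?thesis by linarith
  qed auto
  moreover have "b \<le> b' + 1"
  proof (cases "b \<le> 1")
    case False
    then have "bv False b \<in> S a b" by (intro bv_in_S) auto
    then have "bv False (b - 1) \<in> S a' b'" using h False Nop_bv[of b False] by force
    then have "b - 1 \<le> b'" using False bv_in_S_iff[of "b - 1" False a' b'] by auto
    then show ?thesis by linarith
  qed auto
  ultimately show ?thesis by simp
qed

lemma cact_apply: "cact t v (c, j) = (if c then inverse t else t) * v (c, j)"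
  by (simp add: cact_def)

lemma cact_S: "t \<noteq> 0 \<Longrightarrow> cact t ` S a b = S a b"
proof
  assume t: "t \<noteq> 0"
  have *: "cact c v \<in> S a b" if "c \<noteq> 0" "v \<in> S a b" for c v
    unfolding S_char mem_Collect_eq
  proof (intro allI impI)
    fix x assume h: "cact c v x \<noteq> 0"
    obtain d j where x: "x = (d, j)" by (cases x)
    have "v x \<noteq> 0" using h unfolding x cact_apply by auto
    then show "x \<in> J a b" using that(2) unfolding S_char by blast
  qed
  show "cact t ` S a b \<subseteq> S a b" using * t by blast
  show "S a b \<subseteq> cact t ` S a b"
  proof
    fix v assume v: "v \<in> S a b"
    have "v = cact t (cact (inverse t) v)" using t by (auto simp: fun_eq_iff cact_def)
    moreover have "cact (inverse t) v \<in> S a b"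
      using v t * by simp
    ultimately show "v \<in> cact t ` S a b" by blast
  qed
qed

lemma Vsp_eq: "Vsp n k = S (n - k) k" unfolding Vsp_def S_def ..

lemma S_sub_F:
  assumes "csubspace F" "\<And>c i. 1 \<le> i \<Longrightarrow> i \<le> (if c then a else b) \<Longrightarrow> bv c i \<in> F"
  shows "S a b \<subseteq> F"
  unfolding S_def cspan_eq
proof (rule cv.span_minimal)
  show "{bv True j |j. 1 \<le> j \<and> j \<le> a} \<union> {bv False r |r. 1 \<le> r \<and> r \<le> b} \<subseteq> F"
    using assms(2)[of _ True] assms(2)[of _ False] by auto
  show "cv.subspace F" using assms(1) csubspace_eq by simp
qed

lemma graded:
  assumes sub: "csubspace F" and FV: "F \<subseteq> S p q" and NF: "Nop ` F \<subseteq> F"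
    and fx: "\<forall>t::complex. t \<noteq> 0 \<longrightarrow> cact t ` F = F"
  shows "\<exists>a b. F = S a b"
proof -
  have sF: "cv.subspace F" using sub by (simp add: csubspace_eq)
  define proj where "proj c v = (\<lambda>x. if fst x = c then v x else (0::complex))" for c and v :: vect
  have projF: "proj c v \<in> F" if v: "v \<in> F" for c v
  proof -
    have "cact 2 ` F = F" using fx by simp
    then have w: "cact 2 v \<in> F" using v by blast
    have pT: "proj True v = cscale (-2/3) (cact 2 v - cscale 2 v)"
      by (auto simp: fun_eq_iff proj_def cscale_def cact_def)
    have t: "proj True v \<in> F" unfolding pT
      by (intro cv.subspace_scale[OF sF] cv.subspace_diff[OF sF] w v)
    show ?thesis
    proof (cases c)
      case True then show ?thesis using t by simp
    next
      case False
      have "proj False v = v - proj True v" by (auto simp: fun_eq_iff proj_def)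
      then show ?thesis using False t v cv.subspace_diff[OF sF] by simp
    qed
  qed
  have claim: "\<And>u. u \<in> F \<Longrightarrow> (\<forall>x. u x \<noteq> 0 \<longrightarrow> fst x = c \<and> 1 \<le> snd x \<and> snd x \<le> j) \<Longrightarrow> u (c, j) \<noteq> 0
      \<Longrightarrow> (\<forall>i. 1 \<le> i \<and> i \<le> j \<longrightarrow> bv c i \<in> F)" for c j
  proof (induction j)
    case 0
    have "1 \<le> snd (c, 0::nat)" using "0.prems"(2)[rule_format, OF "0.prems"(3)] by blast
    then show ?case by simp
  next
    case (Suc j u)
    have H: "\<forall>i. 1 \<le> i \<and> i \<le> j \<longrightarrow> bv c i \<in> F"
    proof (cases "j = 0")
      case False
      have "Nop u \<in> F" using NF Suc.prems(1) by blast
      moreover have "\<forall>x. Nop u x \<noteq> 0 \<longrightarrow> fst x = c \<and> 1 \<le> snd x \<and> snd x \<le> j"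
      proof (intro allI impI)
        fix x assume "Nop u x \<noteq> 0"
        moreover obtain d i where x: "x = (d, i)" by (cases x)
        ultimately have "i \<noteq> 0" "u (d, Suc i) \<noteq> 0" by (auto simp: Nop_apply split: if_splits)
        then have "d = c \<and> Suc i \<le> Suc j" using Suc.prems(2)[rule_format, of "(d, Suc i)"] by simp
        then show "fst x = c \<and> 1 \<le> snd x \<and> snd x \<le> j" using x \<open>i \<noteq> 0\<close> by simp
      qed
      moreover have "Nop u (c, j) \<noteq> 0" using False Suc.prems(3) by (simp add: Nop_apply)
      ultimately show ?thesis using Suc.IH by blast
    qed simp
    define r where "r = (\<lambda>x. if snd x \<le> j then u x else (0::complex))"
    have rS: "r \<in> S (if c then j else 0) (if c then 0 else j)"
      unfolding S_char J_def mem_Collect_eq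
    proof (intro allI impI)
      fix x assume "r x \<noteq> 0"
      then have "u x \<noteq> 0" "snd x \<le> j" by (auto simp: r_def split: if_splits)
      moreover have "fst x = c \<and> 1 \<le> snd x" using Suc.prems(2)[rule_format, OF \<open>u x \<noteq> 0\<close>] by simp
      ultimately show "1 \<le> snd x \<and> snd x \<le> (if fst x then if c then j else 0 else if c then 0 else j)"
        by auto
    qed
    have "S (if c then j else 0) (if c then 0 else j) \<subseteq> F"
      by (rule S_sub_F[OF sub]) (use H in \<open>auto split: if_splits\<close>)
    with rS have rF: "r \<in> F" by blast
    have eq: "u - r = cscale (u (c, Suc j)) (bv c (Suc j))"
    proof
      fix x :: "bool \<times> nat"
      obtain d i where x: "x = (d, i)" by (cases x)
      show "(u - r) x = cscale (u (c, Suc j)) (bv c (Suc j)) x"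
      proof (cases "i \<le> j")
        case True then show ?thesis by (auto simp: x r_def cscale_def bv_def)
      next
        case False
        have "x = (c, Suc j)" if ux: "u x \<noteq> 0"
        proof -
          have "fst x = c \<and> 1 \<le> snd x \<and> snd x \<le> Suc j" using Suc.prems(2) ux by blast
          then show ?thesis using False x by simp
        qed
        then have ux: "x \<noteq> (c, Suc j) \<Longrightarrow> u x = 0" by blast
        have r0: "r x = 0" using False x by (simp add: r_def)
        have lhs: "(u - r) x = u x" using r0 by simp
        show ?thesis
        proof (cases "x = (c, Suc j)")
          case True
          have "cscale (u (c, Suc j)) (bv c (Suc j)) x = u x" using True by (simp add: cscale_def bv_def)
          then show ?thesis using lhs by simp
        next
          case False then show ?thesis using ux by (simp add: lhs r0 cscale_def bv_def)
        qed
      qed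
    qed
    have "u - r \<in> F" using cv.subspace_diff[OF sF Suc.prems(1) rF] .
    then have "cscale (inverse (u (c, Suc j))) (u - r) \<in> F" by (rule cv.subspace_scale[OF sF])
    also have "cscale (inverse (u (c, Suc j))) (u - r) = bv c (Suc j)"
      unfolding eq using Suc.prems(3) by (auto simp: cscale_def fun_eq_iff)
    finally have "bv c (Suc j) \<in> F" .
    with H show ?case using le_Suc_eq by blast
  qed
  define M where "M c = Max (insert 0 {j. 1 \<le> j \<and> j \<le> (if c then p else q) \<and> bv c j \<in> F})" for c
  have finM: "finite (insert 0 {j. 1 \<le> j \<and> j \<le> (if c then p else q) \<and> bv c j \<in> F})" for c
    by (rule finite_subset[of _ "{..(if c then p else q)}"]) auto
  have low: "bv c i \<in> F" if "1 \<le> i" "i \<le> M c" for c i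
  proof -
    have "M c \<noteq> 0" using that by simp
    then have "M c \<in> {j. 1 \<le> j \<and> j \<le> (if c then p else q) \<and> bv c j \<in> F}"
      using Max_in[OF finM[of c]] unfolding M_def by auto
    then have b: "bv c (M c) \<in> F" by simp
    have "\<forall>i. 1 \<le> i \<and> i \<le> M c \<longrightarrow> bv c i \<in> F"
      by (rule claim[OF b]) (use \<open>M c \<noteq> 0\<close> in \<open>auto simp: bv_def Suc_le_eq\<close>)
    then show ?thesis using that by blast
  qed
  have high: "j \<le> M c" if v: "v \<in> F" "v (c, j) \<noteq> 0" for v c j
  proof -
    have vS: "\<And>x. v x \<noteq> 0 \<Longrightarrow> x \<in> J p q" using v FV unfolding S_char by blast
    define D where "D = {i. v (c, i) \<noteq> 0}"
    have Dsub: "D \<subseteq> {1..(if c then p else q)}"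
    proof
      fix i assume "i \<in> D"
      then have "(c, i) \<in> J p q" using vS unfolding D_def by blast
      then show "i \<in> {1..(if c then p else q)}" unfolding J_def by simp
    qed
    have finD: "finite D" using Dsub finite_subset by blast
    have jD: "j \<in> D" using v D_def by simp
    define j0 where "j0 = Max D"
    have j0D: "j0 \<in> D" unfolding j0_def using finD jD Max_in by blast
    have jj0: "j \<le> j0" unfolding j0_def using finD jD by simp
    have u: "proj c v \<in> F" using projF v(1) .
    have "\<forall>x. proj c v x \<noteq> 0 \<longrightarrow> fst x = c \<and> 1 \<le> snd x \<and> snd x \<le> j0"
    proof (intro allI impI)
      fix x assume h: "proj c v x \<noteq> 0"
      obtain d i where x: "x = (d, i)" by (cases x)
      have "d = c" "v (c, i) \<noteq> 0" using h x by (auto simp: proj_def split: if_splits)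
      then have "i \<in> D" by (simp add: D_def)
      then show "fst x = c \<and> 1 \<le> snd x \<and> snd x \<le> j0"
        using Dsub finD \<open>d = c\<close> x unfolding j0_def by auto
    qed
    moreover have "proj c v (c, j0) \<noteq> 0" using j0D by (simp add: D_def proj_def)
    ultimately have "\<forall>i. 1 \<le> i \<and> i \<le> j0 \<longrightarrow> bv c i \<in> F" using claim[OF u] by blast
    moreover have "1 \<le> j0" "j0 \<le> (if c then p else q)" using j0D Dsub by auto
    ultimately have "j0 \<in> insert 0 {j. 1 \<le> j \<and> j \<le> (if c then p else q) \<and> bv c j \<in> F}" by auto
    then have "j0 \<le> M c" unfolding M_def using finM by simp
    then show ?thesis using jj0 by simp
  qed
  have "F = S (M True) (M False)"
  proof
    show "S (M True) (M False) \<subseteq> F"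
      by (rule S_sub_F[OF sub]) (auto intro: low split: if_splits)
    show "F \<subseteq> S (M True) (M False)"
    proof
      fix v assume v: "v \<in> F"
      show "v \<in> S (M True) (M False)" unfolding S_char mem_Collect_eq
      proof (intro allI impI)
        fix x assume h: "v x \<noteq> 0"
        obtain d i where x: "x = (d, i)" by (cases x)
        have "x \<in> J p q" using v FV h unfolding S_char by blast
        moreover have "i \<le> M d" using high v h x by simp
        ultimately show "x \<in> J (M True) (M False)" using x unfolding J_def by (cases d) auto
      qed
    qed
  qed
  then show ?thesis by blast
qed


definition cnt :: "nat list \<Rightarrow> nat \<Rightarrow> nat" where
  "cnt xs s = length (filter (\<lambda>x. x \<le> s) xs)"

lemma cnt_simps[simp]: "cnt [] s = 0" "cnt (x # xs) s = (if x \<le> s then 1 else 0) + cnt xs s"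
  by (auto simp: cnt_def)

lemma cnt_append[simp]: "cnt (xs @ ys) s = cnt xs s + cnt ys s"
  by (simp add: cnt_def)

lemma cnt_le_length: "cnt xs s \<le> length xs"
  by (simp add: cnt_def)

lemma cnt_mono: "s \<le> s' \<Longrightarrow> cnt xs s \<le> cnt xs s'"
  by (induction xs) auto

lemma tflag_nth: "l < length ty \<Longrightarrow> tflag ty w ! l = S (cnt (fst w) (ty ! l)) (cnt (snd w) (ty ! l))"
  by (simp add: tflag_def S_def cnt_def)

lemma count_distinct: "distinct xs \<Longrightarrow> count_list xs x = (if x \<in> set xs then 1 else 0)"
  by (induction xs) auto

definition pv :: "(nat \<Rightarrow> nat) \<Rightarrow> nat \<Rightarrow> nat" where
  "pv A l = (if l = 0 then 0 else A (l - 1))"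

definition good :: "nat \<Rightarrow> nat \<Rightarrow> nat list \<Rightarrow> (nat \<Rightarrow> nat) \<Rightarrow> (nat \<Rightarrow> nat) \<Rightarrow> bool" where
  "good n k ty A B \<longleftrightarrow> (\<forall>l < length ty. A l + B l = ty ! l \<and> A l \<le> n - k \<and> B l \<le> k \<and>
     pv A l \<le> A l \<and> A l \<le> pv A l + 1 \<and> pv B l \<le> B l \<and> B l \<le> pv B l + 1)"

lemma flag_good:
  assumes g: "good n k ty A B" and len: "length Fs = length ty"
    and F: "\<forall>l<length ty. Fs ! l = S (A l) (B l)"
  shows "Fs \<in> Sp n k ty \<and> (\<forall>t::complex. t \<noteq> 0 \<longrightarrow> flag_act t Fs = Fs)"
proof -
  have G: "A l + B l = ty ! l \<and> A l \<le> n - k \<and> B l \<le> k \<and>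
     pv A l \<le> A l \<and> A l \<le> pv A l + 1 \<and> pv B l \<le> B l \<and> B l \<le> pv B l + 1" if "l < length ty" for l
    using g that unfolding good_def by blast
  have p1: "csubspace (Fs ! l) \<and> Fs ! l \<subseteq> Vsp n k \<and> cdim (Fs ! l) = ty ! l" if l: "l < length ty" for l
    using F l G[OF l] S_subspace S_dim S_mono Vsp_eq by simp
  have p2: "Fs ! l \<subseteq> Fs ! Suc l" if l: "Suc l < length ty" for l
  proof -
    have "A l \<le> A (Suc l)" "B l \<le> B (Suc l)" using G[OF l] by (auto simp: pv_def)
    then show ?thesis using F l S_mono by simp
  qed
  have p3: "Nop ` (Fs ! l) \<subseteq> (if l = 0 then {0} else Fs ! (l - 1))" if l: "l < length ty" for l
  proof -
    have "Nop ` (Fs ! l) \<subseteq> S (A l - 1) (B l - 1)" using F l Nop_S by simp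
    also have "\<dots> \<subseteq> S (pv A l) (pv B l)" using G[OF l] by (intro S_mono) auto
    also have "\<dots> = (if l = 0 then {0} else Fs ! (l - 1))" using F l S00 by (auto simp: pv_def)
    finally show ?thesis .
  qed
  have fx: "flag_act t Fs = Fs" if "t \<noteq> 0" for t :: complex
    unfolding flag_act_def
  proof (rule nth_equalityI)
    show "length (map ((`) (cact t)) Fs) = length Fs" by simp
    fix i assume "i < length (map ((`) (cact t)) Fs)"
    then show "map ((`) (cact t)) Fs ! i = Fs ! i" using F len cact_S[OF that] by simp
  qed
  show ?thesis unfolding Sp_def using len p1 p2 p3 fx by blast
qed

locale tyloc =
  fixes n :: nat and ty :: "nat list"
  assumes vt: "valid_type n ty"
begin

lemma ne: "ty \<noteq> []" and hd_pos: "0 < hd ty" and srt: "sorted_wrt (<) ty" and lst: "last ty = n"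
  using vt by (auto simp: valid_type_def)

lemma ty_less: "i < length ty \<Longrightarrow> j < length ty \<Longrightarrow> ty ! i < ty ! j \<longleftrightarrow> i < j"
  using srt by (metis nat_neq_iff order_less_asym sorted_wrt_nth_less)

lemma ty_le: "i < length ty \<Longrightarrow> j < length ty \<Longrightarrow> ty ! i \<le> ty ! j \<longleftrightarrow> i \<le> j"
  using ty_less by (metis not_le)

lemma ty_pos: "x \<in> set ty \<Longrightarrow> 0 < x"
proof -
  assume "x \<in> set ty"
  then obtain j where j: "j < length ty" "x = ty ! j" by (auto simp: in_set_conv_nth)
  have "hd ty = ty ! 0" using ne by (simp add: hd_conv_nth)
  moreover have "ty ! 0 \<le> ty ! j" using j ty_le[of 0 j] ne by simp
  ultimately show ?thesis using hd_pos j by simp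
qed

lemma ty_le_n: "x \<in> set ty \<Longrightarrow> x \<le> n"
proof -
  assume "x \<in> set ty"
  then obtain j where j: "j < length ty" "x = ty ! j" by (auto simp: in_set_conv_nth)
  have "last ty = ty ! (length ty - 1)" using ne by (simp add: last_conv_nth)
  moreover have "ty ! j \<le> ty ! (length ty - 1)" using j ty_le by simp
  ultimately show ?thesis using lst j by simp
qed

lemma dist: "distinct ty" using srt strict_sorted_iff by blast

lemma prevd_le: "l < length ty \<Longrightarrow> prevd ty l \<le> ty ! l"
  by (auto simp: prevd_def ty_le)

lemma key: "x \<in> set ty \<Longrightarrow> l < length ty \<Longrightarrow> (x \<le> ty ! l \<and> \<not> x \<le> prevd ty l) \<longleftrightarrow> x = ty ! l"
proof -
  assume x: "x \<in> set ty" and l: "l < length ty"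
  then obtain j where j: "j < length ty" "x = ty ! j" by (auto simp: in_set_conv_nth)
  show ?thesis
  proof (cases "l = 0")
    case True
    then show ?thesis using j l ty_pos[OF x] ty_le[of j l] by (auto simp: prevd_def)
  next
    case False
    then show ?thesis using j l ty_le[of j l] ty_le[of j "l - 1"] ty_le[of l j]
      by (auto simp: prevd_def nth_eq_iff_index_eq[OF dist])
  qed
qed

lemma L1: "set xs \<subseteq> set ty \<Longrightarrow> l < length ty \<Longrightarrow>
    cnt xs (ty ! l) = cnt xs (prevd ty l) + count_list xs (ty ! l)"
proof (induction xs)
  case (Cons x xs)
  have "x \<in> set ty" using Cons.prems by simp
  then have k: "(x \<le> ty ! l \<and> \<not> x \<le> prevd ty l) \<longleftrightarrow> x = ty ! l" using key Cons.prems(2) by blast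
  have "prevd ty l \<le> ty ! l" using prevd_le Cons.prems(2) .
  then show ?case using Cons k by auto
qed simp

lemma L0: "set xs \<subseteq> set ty \<Longrightarrow> cnt xs 0 = 0"
  by (induction xs) (auto dest: ty_pos)

lemma cnt_prev: "set xs \<subseteq> set ty \<Longrightarrow> cnt xs (prevd ty l) = pv (\<lambda>l. cnt xs (ty ! l)) l"
  by (simp add: prevd_def pv_def L0)

lemma desc_distinct: "sorted_wrt (>) (xs::nat list) \<Longrightarrow> distinct xs"
proof -
  assume "sorted_wrt (>) xs"
  then have "sorted_wrt (<) (rev xs)" by (simp add: sorted_wrt_rev)
  then show ?thesis by (metis distinct_rev strict_sorted_iff)
qed

lemma tab_good:
  assumes w: "w \<in> row_strict_tableaux n k ty"
  shows "good n k ty (\<lambda>l. cnt (fst w) (ty ! l)) (\<lambda>l. cnt (snd w) (ty ! l))"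
proof -
  obtain top bot where wd: "w = (top, bot)" by (cases w)
  have lt: "length top = n - k" and lb: "length bot = k" and st: "set (top @ bot) \<subseteq> set ty"
    and cc: "\<forall>l < length ty. count_list (top @ bot) (ty ! l) = ty ! l - prevd ty l"
    and s1: "sorted_wrt (>) top" and s2: "sorted_wrt (>) bot"
    using w unfolding wd row_strict_tableaux_def by auto
  have st1: "set top \<subseteq> set ty" and st2: "set bot \<subseteq> set ty" using st by auto
  have T2: "cnt (top @ bot) (ty ! l) = ty ! l" if "l < length ty" for l
    using that
  proof (induction l)
    case 0
    have "cnt (top @ bot) (ty ! 0) = cnt (top @ bot) (prevd ty 0) + count_list (top @ bot) (ty ! 0)"
      using L1[OF st 0] .
    also have "cnt (top @ bot) (prevd ty 0) = 0" using L0[OF st] by (simp add: prevd_def)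
    finally show ?case using cc 0 by (simp add: prevd_def)
  next
    case (Suc l)
    have "cnt (top @ bot) (ty ! Suc l) = cnt (top @ bot) (prevd ty (Suc l)) + count_list (top @ bot) (ty ! Suc l)"
      using L1[OF st Suc.prems] .
    also have "cnt (top @ bot) (prevd ty (Suc l)) = prevd ty (Suc l)"
      using Suc.IH Suc.prems by (simp add: prevd_def)
    finally show ?case using cc Suc.prems prevd_le[OF Suc.prems] by simp
  qed
  have step: "pv (\<lambda>l. cnt xs (ty ! l)) l \<le> cnt xs (ty ! l) \<and> cnt xs (ty ! l) \<le> pv (\<lambda>l. cnt xs (ty ! l)) l + 1"
    if "set xs \<subseteq> set ty" "sorted_wrt (>) xs" "l < length ty" for xs l
  proof -
    have "cnt xs (ty ! l) = pv (\<lambda>l. cnt xs (ty ! l)) l + count_list xs (ty ! l)"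
      using L1[OF that(1,3)] cnt_prev[OF that(1)] by simp
    moreover have "count_list xs (ty ! l) \<le> 1" using count_distinct[OF desc_distinct[OF that(2)]] by simp
    ultimately show ?thesis by simp
  qed
  show ?thesis unfolding good_def wd fst_conv snd_conv
  proof (intro allI impI)
    fix l assume l: "l < length ty"
    have "cnt top (ty ! l) + cnt bot (ty ! l) = ty ! l" using T2[OF l] by simp
    moreover have "cnt top (ty ! l) \<le> n - k" using cnt_le_length[of top] lt by simp
    moreover have "cnt bot (ty ! l) \<le> k" using cnt_le_length[of bot] lb by simp
    ultimately show "cnt top (ty ! l) + cnt bot (ty ! l) = ty ! l \<and> cnt top (ty ! l) \<le> n - k \<and> cnt bot (ty ! l) \<le> k \<and>
       pv (\<lambda>l. cnt top (ty ! l)) l \<le> cnt top (ty ! l) \<and> cnt top (ty ! l) \<le> pv (\<lambda>l. cnt top (ty ! l)) l + 1 \<and>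
       pv (\<lambda>l. cnt bot (ty ! l)) l \<le> cnt bot (ty ! l) \<and> cnt bot (ty ! l) \<le> pv (\<lambda>l. cnt bot (ty ! l)) l + 1"
      using step[OF st1 s1 l] step[OF st2 s2 l] by blast
  qed
qed

lemma fix_good:
  assumes Fs: "Fs \<in> Sp n k ty" and fx: "\<forall>t::complex. t \<noteq> 0 \<longrightarrow> flag_act t Fs = Fs"
  shows "\<exists>A B. good n k ty A B \<and> (\<forall>l<length ty. Fs ! l = S (A l) (B l))"
proof -
  have len: "length Fs = length ty"
    and P1: "\<And>l. l < length ty \<Longrightarrow> csubspace (Fs ! l) \<and> Fs ! l \<subseteq> Vsp n k \<and> cdim (Fs ! l) = ty ! l"
    and P2: "\<And>l. Suc l < length ty \<Longrightarrow> Fs ! l \<subseteq> Fs ! Suc l"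
    and P3: "\<And>l. l < length ty \<Longrightarrow> Nop ` (Fs ! l) \<subseteq> (if l = 0 then {0} else Fs ! (l - 1))"
    using Fs unfolding Sp_def by auto
  have ex: "\<exists>a b. Fs ! l = S a b" if l: "l < length ty" for l
  proof -
    have sub: "csubspace (Fs ! l)" using P1[OF l] by blast
    have V: "Fs ! l \<subseteq> S (n - k) k" using P1[OF l] Vsp_eq by simp
    have N: "Nop ` (Fs ! l) \<subseteq> Fs ! l"
    proof (cases "l = 0")
      case True
      have "0 \<in> Fs ! l" using sub cv.subspace_0 csubspace_eq by simp
      then show ?thesis using P3[OF l] True by auto
    next
      case False
      then have "Fs ! (l - 1) \<subseteq> Fs ! l" using P2[of "l - 1"] l by simp
      then show ?thesis using P3[OF l] False by auto
    qed
    have C: "\<forall>t::complex. t \<noteq> 0 \<longrightarrow> cact t ` (Fs ! l) = Fs ! l"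
    proof (intro allI impI)
      fix t :: complex assume "t \<noteq> 0"
      then have "flag_act t Fs ! l = Fs ! l" using fx by simp
      then show "cact t ` (Fs ! l) = Fs ! l" using l len by (simp add: flag_act_def)
    qed
    show ?thesis using graded[OF sub V N C] .
  qed
  have "\<forall>l. \<exists>p. l < length ty \<longrightarrow> Fs ! l = S (fst p) (snd p)" using ex by fastforce
  then obtain f where f: "\<forall>l. l < length ty \<longrightarrow> Fs ! l = S (fst (f l)) (snd (f l))"
    by (metis choice)
  define A where "A l = fst (f l)" for l
  define B where "B l = snd (f l)" for l
  have F: "\<forall>l<length ty. Fs ! l = S (A l) (B l)" using f A_def B_def by simp
  have "good n k ty A B" unfolding good_def
  proof (intro allI impI)
    fix l assume l: "l < length ty"
    have e1: "A l + B l = ty ! l" using P1[OF l] F l S_dim by metis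
    have e2: "A l \<le> n - k \<and> B l \<le> k" using P1[OF l] F l Vsp_eq S_sub_iff by metis
    have e3: "pv A l \<le> A l \<and> pv B l \<le> B l"
    proof (cases "l = 0")
      case False
      then have "S (A (l - 1)) (B (l - 1)) \<subseteq> S (A l) (B l)" using P2[of "l - 1"] F l by simp
      then show ?thesis using S_sub_iff False by (simp add: pv_def)
    qed (simp add: pv_def)
    have e4: "A l \<le> pv A l + 1 \<and> B l \<le> pv B l + 1"
    proof (cases "l = 0")
      case True
      then have "Nop ` S (A l) (B l) \<subseteq> S 0 0" using P3[OF l] F l S00 by simp
      then show ?thesis using Nop_S_rev True by (simp add: pv_def)
    next
      case False
      then have "Nop ` S (A l) (B l) \<subseteq> S (A (l - 1)) (B (l - 1))" using P3[OF l] F l by simp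
      then show ?thesis using Nop_S_rev False by (simp add: pv_def)
    qed
    show "A l + B l = ty ! l \<and> A l \<le> n - k \<and> B l \<le> k \<and>
     pv A l \<le> A l \<and> A l \<le> pv A l + 1 \<and> pv B l \<le> B l \<and> B l \<le> pv B l + 1"
      using e1 e2 e3 e4 by blast
  qed
  then show ?thesis using F by blast
qed

definition mk :: "(nat \<Rightarrow> nat) \<Rightarrow> nat list" where
  "mk A = rev (map ((!) ty) (filter (\<lambda>l. A l = pv A l + 1) [0..<length ty]))"

lemma mk_set: "set (mk A) \<subseteq> set ty"
  by (auto simp: mk_def)

lemma mk_sorted: "sorted_wrt (>) (mk A)"
proof -
  have "sorted_wrt (<) (filter (\<lambda>l. A l = pv A l + 1) [0..<length ty])"
    by (rule sorted_wrt_filter) (rule sorted_wrt_upt)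
  then have "sorted_wrt (\<lambda>x y. ty ! x < ty ! y) (filter (\<lambda>l. A l = pv A l + 1) [0..<length ty])"
    by (rule sorted_wrt_mono_rel[rotated]) (auto simp: ty_less)
  then show ?thesis unfolding mk_def by (simp add: sorted_wrt_rev sorted_wrt_map)
qed

lemma count_map_nth: "set ys \<subseteq> {..<length ty} \<Longrightarrow> l < length ty \<Longrightarrow>
    count_list (map ((!) ty) ys) (ty ! l) = count_list ys l"
  by (induction ys) (auto simp: nth_eq_iff_index_eq[OF dist])

lemma mk_count:
  assumes l: "l < length ty" and b: "pv A l \<le> A l" "A l \<le> pv A l + 1"
  shows "count_list (mk A) (ty ! l) = A l - pv A l"
proof -
  have "count_list (mk A) (ty ! l) = count_list (filter (\<lambda>l. A l = pv A l + 1) [0..<length ty]) l"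
    unfolding mk_def count_list_rev by (rule count_map_nth) (auto simp: l)
  also have "\<dots> = (if A l = pv A l + 1 then 1 else 0)"
    by (subst count_distinct) (auto simp: l)
  also have "\<dots> = A l - pv A l" using b by auto
  finally show ?thesis .
qed

lemma mk_cnt:
  assumes b: "\<forall>l<length ty. pv A l \<le> A l \<and> A l \<le> pv A l + 1"
  shows "l < length ty \<Longrightarrow> cnt (mk A) (ty ! l) = A l"
proof (induction l)
  case 0
  have "cnt (mk A) (ty ! 0) = cnt (mk A) (prevd ty 0) + count_list (mk A) (ty ! 0)"
    using L1[OF mk_set 0] .
  also have "\<dots> = A 0"
  proof -
    have "pv A 0 \<le> A 0" "A 0 \<le> pv A 0 + 1" using b 0 by auto
    from mk_count[OF 0 this] show ?thesis using L0[OF mk_set] by (simp add: prevd_def pv_def)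
  qed
  finally show ?case .
next
  case (Suc l)
  have "cnt (mk A) (ty ! Suc l) = cnt (mk A) (prevd ty (Suc l)) + count_list (mk A) (ty ! Suc l)"
    using L1[OF mk_set Suc.prems] .
  also have "cnt (mk A) (prevd ty (Suc l)) = A l" using Suc.IH Suc.prems by (simp add: prevd_def)
  also have "count_list (mk A) (ty ! Suc l) = A (Suc l) - A l"
  proof -
    have "pv A (Suc l) \<le> A (Suc l)" "A (Suc l) \<le> pv A (Suc l) + 1" using b Suc.prems by auto
    from mk_count[OF Suc.prems this] show ?thesis by (simp add: pv_def)
  qed
  also have "A l + (A (Suc l) - A l) = A (Suc l)"
  proof -
    have "pv A (Suc l) \<le> A (Suc l)" using b Suc.prems by blast
    then show ?thesis by (simp add: pv_def)
  qed
  finally show ?case .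
qed

lemma mk_len:
  assumes b: "\<forall>l<length ty. pv A l \<le> A l \<and> A l \<le> pv A l + 1"
  shows "length (mk A) = A (length ty - 1)"
proof -
  have "length (mk A) = cnt (mk A) n"
    unfolding cnt_def using mk_set ty_le_n by (subst filter_True) auto
  also have "n = ty ! (length ty - 1)" using lst ne by (simp add: last_conv_nth)
  also have "cnt (mk A) \<dots> = A (length ty - 1)" using mk_cnt[OF b] ne by simp
  finally show ?thesis .
qed

lemma good_tab:
  assumes g: "good n k ty A B" and kn: "k \<le> n"
  shows "(mk A, mk B) \<in> row_strict_tableaux n k ty \<and>
    (\<forall>l<length ty. cnt (mk A) (ty ! l) = A l \<and> cnt (mk B) (ty ! l) = B l)"
proof -
  have G: "A l + B l = ty ! l \<and> A l \<le> n - k \<and> B l \<le> k \<and>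
     pv A l \<le> A l \<and> A l \<le> pv A l + 1 \<and> pv B l \<le> B l \<and> B l \<le> pv B l + 1" if "l < length ty" for l
    using g that unfolding good_def by blast
  have bA: "\<forall>l<length ty. pv A l \<le> A l \<and> A l \<le> pv A l + 1" using G by blast
  have bB: "\<forall>l<length ty. pv B l \<le> B l \<and> B l \<le> pv B l + 1" using G by blast
  have m: "length ty - 1 < length ty" using ne by simp
  have nn: "ty ! (length ty - 1) = n" using lst ne by (simp add: last_conv_nth)
  have lA: "A (length ty - 1) = n - k" and lB: "B (length ty - 1) = k"
    using G[OF m] nn kn by arith+
  have cc: "count_list (mk A @ mk B) (ty ! l) = ty ! l - prevd ty l" if l: "l < length ty" for l
  proof -
    have "pv A l + pv B l = prevd ty l"
    proof (cases "l = 0")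
      case False
      then show ?thesis using G[of "l - 1"] l by (simp add: pv_def prevd_def)
    qed (simp add: pv_def prevd_def)
    then show ?thesis using mk_count[OF l] G[OF l] by simp
  qed
  have "(mk A, mk B) \<in> row_strict_tableaux n k ty"
    unfolding row_strict_tableaux_def
    using mk_len[OF bA] mk_len[OF bB] lA lB mk_set[of A] mk_set[of B] cc mk_sorted[of A] mk_sorted[of B]
    by auto
  then show ?thesis using mk_cnt[OF bA] mk_cnt[OF bB] by blast
qed

lemma cnt_inj:
  assumes xs: "set xs \<subseteq> set ty" "sorted_wrt (>) xs" and ys: "set ys \<subseteq> set ty" "sorted_wrt (>) ys"
    and eq: "\<forall>l<length ty. cnt xs (ty ! l) = cnt ys (ty ! l)"
  shows "xs = ys"
proof -
  have pveq: "pv (\<lambda>l. cnt xs (ty ! l)) l = pv (\<lambda>l. cnt ys (ty ! l)) l" if l: "l < length ty" for l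
    using eq l by (simp add: pv_def)
  have ceq: "count_list xs x = count_list ys x" for x
  proof (cases "x \<in> set ty")
    case True
    then obtain l where l: "l < length ty" "x = ty ! l" by (auto simp: in_set_conv_nth)
    have "cnt xs (ty ! l) = pv (\<lambda>l. cnt xs (ty ! l)) l + count_list xs (ty ! l)"
      using L1[OF xs(1) l(1)] cnt_prev[OF xs(1)] by simp
    moreover have "cnt ys (ty ! l) = pv (\<lambda>l. cnt ys (ty ! l)) l + count_list ys (ty ! l)"
      using L1[OF ys(1) l(1)] cnt_prev[OF ys(1)] by simp
    ultimately show ?thesis using pveq[OF l(1)] eq l by simp
  next
    case False
    then have "x \<notin> set xs" "x \<notin> set ys" using xs(1) ys(1) by auto
    then show ?thesis by simp
  qed
  have "set xs = set ys"
  proof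
    show "set xs \<subseteq> set ys"
    proof
      fix x assume "x \<in> set xs"
      then show "x \<in> set ys" using ceq[of x] count_list_0_iff[of xs x] count_list_0_iff[of ys x] by auto
    qed
    show "set ys \<subseteq> set xs"
    proof
      fix x assume "x \<in> set ys"
      then show "x \<in> set xs" using ceq[of x] count_list_0_iff[of xs x] count_list_0_iff[of ys x] by auto
    qed
  qed
  moreover have "sorted_wrt (<) (rev xs)" "sorted_wrt (<) (rev ys)"
    using xs ys by (simp_all add: sorted_wrt_rev)
  ultimately have "rev xs = rev ys"
    using sorted_distinct_set_unique[of "rev xs" "rev ys"] unfolding strict_sorted_iff set_rev by blast
  then show ?thesis by simp
qed

end

theorem lemma5p2:
  fixes n k :: nat and ty :: "nat list"
  assumes "2 * k \<le> n" and "valid_type n ty"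
  shows "bij_betw (tflag ty) (row_strict_tableaux n k ty)
           {Fs \<in> Sp n k ty. \<forall>t::complex. t \<noteq> 0 \<longrightarrow> flag_act t Fs = Fs}"
proof -
  interpret tyloc n ty using assms(2) by unfold_locales
  have kn: "k \<le> n" using assms(1) by simp
  let ?R = "row_strict_tableaux n k ty"
  let ?X = "{Fs \<in> Sp n k ty. \<forall>t::complex. t \<noteq> 0 \<longrightarrow> flag_act t Fs = Fs}"
  have Rprops: "set (fst w) \<subseteq> set ty \<and> sorted_wrt (>) (fst w) \<and> set (snd w) \<subseteq> set ty \<and> sorted_wrt (>) (snd w)"
    if "w \<in> ?R" for w
    using that unfolding row_strict_tableaux_def by auto
  have inj: "inj_on (tflag ty) ?R"
  proof (rule inj_onI)
    fix w w' assume w: "w \<in> ?R" and w': "w' \<in> ?R" and e: "tflag ty w = tflag ty w'"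
    have ce: "cnt (fst w) (ty ! l) = cnt (fst w') (ty ! l) \<and> cnt (snd w) (ty ! l) = cnt (snd w') (ty ! l)"
      if l: "l < length ty" for l
    proof -
      have "S (cnt (fst w) (ty ! l)) (cnt (snd w) (ty ! l)) = S (cnt (fst w') (ty ! l)) (cnt (snd w') (ty ! l))"
        using e tflag_nth[OF l, of w] tflag_nth[OF l, of w'] by simp
      then show ?thesis by (rule S_eq_iff)
    qed
    have c1: "\<forall>l<length ty. cnt (fst w) (ty ! l) = cnt (fst w') (ty ! l)" using ce by blast
    have c2: "\<forall>l<length ty. cnt (snd w) (ty ! l) = cnt (snd w') (ty ! l)" using ce by blast
    note r = Rprops[OF w] Rprops[OF w']
    have "fst w = fst w'"
      using cnt_inj[OF conjunct1[OF r(1)] conjunct1[OF conjunct2[OF r(1)]]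
          conjunct1[OF r(2)] conjunct1[OF conjunct2[OF r(2)]] c1] .
    moreover have "snd w = snd w'"
      using cnt_inj[OF conjunct1[OF conjunct2[OF conjunct2[OF r(1)]]] conjunct2[OF conjunct2[OF conjunct2[OF r(1)]]]
          conjunct1[OF conjunct2[OF conjunct2[OF r(2)]]] conjunct2[OF conjunct2[OF conjunct2[OF r(2)]]] c2] .
    ultimately show "w = w'" by (simp add: prod_eq_iff)
  qed
  have img1: "tflag ty w \<in> ?X" if w: "w \<in> ?R" for w
  proof -
    have "tflag ty w \<in> Sp n k ty \<and> (\<forall>t::complex. t \<noteq> 0 \<longrightarrow> flag_act t (tflag ty w) = tflag ty w)"
    proof (rule flag_good[OF tab_good[OF w]])
      show "length (tflag ty w) = length ty" by (simp add: tflag_def)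
      show "\<forall>l<length ty. tflag ty w ! l = S (cnt (fst w) (ty ! l)) (cnt (snd w) (ty ! l))"
        using tflag_nth by blast
    qed
    then show ?thesis by simp
  qed
  have img2: "Fs \<in> tflag ty ` ?R" if Fs: "Fs \<in> ?X" for Fs
  proof -
    from Fs have F1: "Fs \<in> Sp n k ty" and F2: "\<forall>t::complex. t \<noteq> 0 \<longrightarrow> flag_act t Fs = Fs" by auto
    obtain A B where g: "good n k ty A B" and F: "\<forall>l<length ty. Fs ! l = S (A l) (B l)"
      using fix_good[OF F1 F2] by blast
    have len: "length Fs = length ty" using F1 unfolding Sp_def by simp
    from good_tab[OF g kn] have inR: "(mk A, mk B) \<in> ?R"
      and c: "\<forall>l<length ty. cnt (mk A) (ty ! l) = A l \<and> cnt (mk B) (ty ! l) = B l" by auto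
    have "tflag ty (mk A, mk B) = Fs"
    proof (rule nth_equalityI)
      show "length (tflag ty (mk A, mk B)) = length Fs" using len by (simp add: tflag_def)
      fix l assume "l < length (tflag ty (mk A, mk B))"
      then have l: "l < length ty" by (simp add: tflag_def)
      show "tflag ty (mk A, mk B) ! l = Fs ! l" using tflag_nth[OF l] c F l by simp
    qed
    then show ?thesis using inR by (auto intro: image_eqI[of Fs "tflag ty" "(mk A, mk B)"])
  qed
  have "tflag ty ` ?R = ?X"
  proof (intro equalityI subsetI)
    fix x assume "x \<in> tflag ty ` ?R"
    then obtain w where "w \<in> ?R" "x = tflag ty w" by blast
    then show "x \<in> ?X" using img1 by simp
  next
    fix x assume "x \<in> ?X"
    then show "x \<in> tflag ty ` ?R" by (rule img2)
  qed
  then show ?thesis unfolding bij_betw_def using inj by simp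
qed

end
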